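(* Let $G$ be an infinite simple undirected graph with finite chromatic number $\chi(G)$. Then there is a minor $M$ of $G$ such that $M\not\cong G$ and $\chi(M)=\chi(G)$.
   Context: Graphs are simple and undirected: $G=(V,E)$ with $E \subseteq \{\{x,y\}: x,y\in V,\ x\neq y\}$. $\chi(G)$ denotes the chromatic number of $G$, i.e. the least cardinal $\lambda$ such that there is a graph homomorphism $G \to K_\lambda$; $K_\alpha$ is the complete graph on $\alpha$ vertices. Disjoint sets $S,T\subseteq V(G)$ are connected to each other if there are $s\in S$, $t\in T$ with $\{s,t\}\in E(G)$. For a collection $\mathcal D$ of pairwise disjoint, nonempty subsets of $V(G)$, each inducing a connected subgraph, let $G(\mathcal D)$ be the graph with vertex set $\mathcal D$ in which distinct $d,e\in\mathcal D$ are adjacent iff $d$ and $e$ are connected to each other. A graph $M$ is a minor of $G$ if there is such a collection $\mathcal D$ and an injective graph homomorphism $M \to G(\mathcal D)$. *)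

theory Defs
  imports Main
begin

type_synonym 'a graph = "'a set \<times> 'a set set"

definition verts :: "'a graph \<Rightarrow> 'a set" where "verts G = fst G"
definition edges :: "'a graph \<Rightarrow> 'a set set" where "edges G = snd G"

definition simple_graph :: "'a graph \<Rightarrow> bool" where
  "simple_graph G \<longleftrightarrow> edges G \<subseteq> {{x, y} | x y. x \<in> verts G \<and> y \<in> verts G \<and> x \<noteq> y}"

definition colourable :: "'a graph \<Rightarrow> nat \<Rightarrow> bool" where
  "colourable G k \<longleftrightarrow> (\<exists>f. f ` verts G \<subseteq> {..<k} \<and>
      (\<forall>x y. {x, y} \<in> edges G \<longrightarrow> f x \<noteq> f y))"

text \<open>Chromatic number, meaningful when it is finite.\<close>
definition finite_chromatic :: "'a graph \<Rightarrow> bool" where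
  "finite_chromatic G \<longleftrightarrow> (\<exists>k. colourable G k)"

definition chromatic_number :: "'a graph \<Rightarrow> nat" where
  "chromatic_number G = (LEAST k. colourable G k)"

definition induces_connected :: "'a graph \<Rightarrow> 'a set \<Rightarrow> bool" where
  "induces_connected G S \<longleftrightarrow> S \<subseteq> verts G \<and>
     (\<forall>x\<in>S. \<forall>y\<in>S. (x, y) \<in> ({(u, v). u \<in> S \<and> v \<in> S \<and> {u, v} \<in> edges G})\<^sup>*)"

definition connected_to :: "'a graph \<Rightarrow> 'a set \<Rightarrow> 'a set \<Rightarrow> bool" where
  "connected_to G S T \<longleftrightarrow> (\<exists>s\<in>S. \<exists>t\<in>T. {s, t} \<in> edges G)"

definition branch_sets :: "'a graph \<Rightarrow> 'a set set \<Rightarrow> bool" where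
  "branch_sets G D \<longleftrightarrow> (\<forall>d\<in>D. d \<noteq> {} \<and> induces_connected G d) \<and>
     (\<forall>d\<in>D. \<forall>e\<in>D. d \<noteq> e \<longrightarrow> d \<inter> e = {})"

definition contract :: "'a graph \<Rightarrow> 'a set set \<Rightarrow> 'a set graph" where
  "contract G D = (D, {{d, e} | d e. d \<in> D \<and> e \<in> D \<and> d \<noteq> e \<and> connected_to G d e})"

definition graph_hom :: "'b graph \<Rightarrow> 'c graph \<Rightarrow> ('b \<Rightarrow> 'c) \<Rightarrow> bool" where
  "graph_hom M H h \<longleftrightarrow> h ` verts M \<subseteq> verts H \<and>
     (\<forall>x y. {x, y} \<in> edges M \<longrightarrow> {h x, h y} \<in> edges H)"

definition is_minor :: "'b graph \<Rightarrow> 'a graph \<Rightarrow> bool" where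
  "is_minor M G \<longleftrightarrow> (\<exists>D h. branch_sets G D \<and> inj_on h (verts M) \<and> graph_hom M (contract G D) h)"

definition graph_iso :: "'b graph \<Rightarrow> 'a graph \<Rightarrow> bool" where
  "graph_iso M G \<longleftrightarrow> (\<exists>h. bij_betw h (verts M) (verts G) \<and>
     (\<forall>x\<in>verts M. \<forall>y\<in>verts M. {x, y} \<in> edges M \<longleftrightarrow> {h x, h y} \<in> edges G))"

end

theory Submission
  imports Defs "HOL-Analysis.Analysis"
begin

lemma dbe:
  fixes G :: "'a graph"
  assumes sg: "simple_graph G"
    and fin: "\<And>S. finite S \<Longrightarrow> S \<subseteq> verts G \<Longrightarrow>
      \<exists>f. f ` S \<subseteq> {..<m} \<and> (\<forall>x\<in>S. \<forall>y\<in>S. {x,y} \<in> edges G \<longrightarrow> f x \<noteq> f y)"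
  shows "colourable G m"
proof (cases "m = 0")
  case True
  show ?thesis
  proof (cases "verts G = {}")
    case True
    have "edges G = {}" using sg True unfolding simple_graph_def by auto
    then show ?thesis using True unfolding colourable_def by auto
  next
    case False
    then obtain v where "v \<in> verts G" by auto
    from fin[of "{v}"] this \<open>m = 0\<close> show ?thesis by auto
  qed
next
  case mpos: False
  define V where "V = verts G"
  define X where "X = product_topology (\<lambda>_. discrete_topology {..<m}) V"
  define T where "T = topspace X"
  have T: "T = (\<Pi>\<^sub>E i\<in>V. {..<m})" unfolding T_def X_def by simp
  have cs: "compact_space X" unfolding X_def
    by (simp add: compact_space_product_topology compact_space_discrete_topology)
  define C where "C x y = {f\<in>T. f x \<noteq> f y}" for x y
  define U where "U = (\<lambda>(x,y). C x y) ` {(x,y). x \<in> V \<and> y \<in> V \<and> {x,y} \<in> edges G}"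
  have clo: "closedin X (C x y)" if "x \<in> V" "y \<in> V" for x y
  proof -
    have eq: "{f\<in>T. f x = f y} = (\<Union>c\<in>{..<m}. {f\<in>topspace X. f x \<in> {c}} \<inter> {f\<in>topspace X. f y \<in> {c}})"
      using that unfolding T_def[symmetric] T by (auto simp: PiE_iff)
    have op: "openin X {f\<in>topspace X. f z \<in> {c}}" if "z \<in> V" "c < m" for z c
      using openin_continuous_map_preimage[OF continuous_map_product_projection[OF that(1), where X="\<lambda>_. discrete_topology {..<m}"], where U="{c}"]
        that(2) unfolding X_def by simp
    have "openin X {f\<in>T. f x = f y}"
      unfolding eq
      apply (rule openin_Union)
      using that op by auto
    then have "closedin X (T - {f\<in>T. f x = f y})"
      unfolding T_def by (intro closedin_diff) auto
    moreover have "T - {f\<in>T. f x = f y} = C x y" unfolding C_def by auto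
    ultimately show ?thesis by simp
  qed
  have "compactin X T" using cs unfolding compact_space_def T_def .
  then have fip: "\<And>\<U>. (\<forall>C\<in>\<U>. closedin X C) \<and> (\<forall>\<F>. finite \<F> \<and> \<F> \<subseteq> \<U> \<longrightarrow> T \<inter> \<Inter>\<F> \<noteq> {}) \<Longrightarrow> T \<inter> \<Inter>\<U> \<noteq> {}"
    unfolding compactin_fip by blast
  have "T \<inter> \<Inter>U \<noteq> {}"
  proof (rule fip, intro conjI ballI allI impI)
    fix D assume "D \<in> U" then show "closedin X D" unfolding U_def using clo by auto
  next
    fix F assume F: "finite F \<and> F \<subseteq> U"
    then obtain P where P: "P \<subseteq> {(x,y). x \<in> V \<and> y \<in> V \<and> {x,y} \<in> edges G}" "finite P"
      "F = (\<lambda>(x,y). C x y) ` P"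
      unfolding U_def by (metis (no_types, lifting) finite_subset_image)
    define S where "S = fst ` P \<union> snd ` P"
    have "finite S" "S \<subseteq> V" using P unfolding S_def by auto
    then obtain f where f: "f ` S \<subseteq> {..<m}" "\<forall>x\<in>S. \<forall>y\<in>S. {x,y} \<in> edges G \<longrightarrow> f x \<noteq> f y"
      using fin unfolding V_def by blast
    define g where "g = restrict (\<lambda>v. if v \<in> S then f v else 0) V"
    have gT: "g \<in> T" unfolding T g_def using f mpos by (auto simp: image_subset_iff)
    have "g \<in> \<Inter>F"
    proof
      fix D assume "D \<in> F"
      then obtain x y where xy: "(x,y) \<in> P" "D = C x y" using P by auto
      then have "x \<in> S" "y \<in> S" unfolding S_def by force+
      moreover have "{x,y} \<in> edges G" "x \<in> V" "y \<in> V" using xy P by auto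
      ultimately show "g \<in> D" using f gT \<open>S \<subseteq> V\<close> unfolding xy C_def g_def by auto
    qed
    then show "T \<inter> \<Inter>F \<noteq> {}" using gT by auto
  qed
  then obtain g where g: "g \<in> T" "g \<in> \<Inter>U" by auto
  show ?thesis unfolding colourable_def
  proof (intro exI conjI allI impI)
    show "g ` verts G \<subseteq> {..<m}" using g(1) unfolding T V_def by auto
  next
    fix x y assume e: "{x,y} \<in> edges G"
    then have "x \<in> V" "y \<in> V" using sg unfolding simple_graph_def V_def
      by (auto simp: doubleton_eq_iff)
    then have "C x y \<in> U" unfolding U_def using e by auto
    then show "g x \<noteq> g y" using g(2) unfolding C_def by auto
  qed
qed

theorem mainTheorem5:
  fixes G :: "'a graph"
  assumes "simple_graph G"
    and "infinite (verts G)"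
    and "finite_chromatic G"
  shows "\<exists>M :: 'a set graph. simple_graph M \<and> is_minor M G \<and> \<not> graph_iso M G \<and>
           finite_chromatic M \<and> chromatic_number M = chromatic_number G"
proof -
  define k where "k = chromatic_number G"
  have ck: "colourable G k" using assms(3) LeastI_ex unfolding k_def chromatic_number_def finite_chromatic_def
    by metis
  have k0: "k \<noteq> 0"
  proof
    assume "k = 0"
    then show False using ck assms(2) unfolding colourable_def by (auto simp: infinite_imp_nonempty)
  qed
  have nck: "\<not> colourable G (k - 1)"
    using not_less_Least[of "k - 1" "colourable G"] k0 unfolding k_def chromatic_number_def by auto
  obtain S where S1: "finite S" "S \<subseteq> verts G" and
    S2: "\<not>(\<exists>f. f ` S \<subseteq> {..<k-1} \<and> (\<forall>x\<in>S. \<forall>y\<in>S. {x,y} \<in> edges G \<longrightarrow> f x \<noteq> f y))"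
  proof (rule ccontr)
    assume "\<not> thesis"
    then have "\<And>S. finite S \<Longrightarrow> S \<subseteq> verts G \<Longrightarrow>
      \<exists>f. f ` S \<subseteq> {..<k-1} \<and> (\<forall>x\<in>S. \<forall>y\<in>S. {x,y} \<in> edges G \<longrightarrow> f x \<noteq> f y)"
      using that by blast
    then have "colourable G (k-1)" by (rule dbe[OF assms(1)])
    then show False using nck by simp
  qed
  have S: "finite S" "S \<subseteq> verts G"
    "\<And>f. f ` S \<subseteq> {..<k-1} \<Longrightarrow> \<exists>x\<in>S. \<exists>y\<in>S. {x,y} \<in> edges G \<and> f x = f y"
    using S1 S2 by auto
  obtain fG where fG: "fG ` verts G \<subseteq> {..<k}" "\<And>x y. {x,y} \<in> edges G \<Longrightarrow> fG x \<noteq> fG y"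
    using ck unfolding colourable_def by blast
  define M :: "'a set graph" where
    "M = ((\<lambda>s. {s}) ` S, {{{x},{y}} | x y. x \<in> S \<and> y \<in> S \<and> {x,y} \<in> edges G})"
  have vM: "verts M = (\<lambda>s. {s}) ` S" and eM: "edges M = {{{x},{y}} | x y. x \<in> S \<and> y \<in> S \<and> {x,y} \<in> edges G}"
    unfolding M_def verts_def edges_def by auto
  have ne: "x \<noteq> y" if "{x,y} \<in> edges G" for x y
    using that assms(1) unfolding simple_graph_def by (auto simp: doubleton_eq_iff)
  have eMD: "\<exists>x y. X = {x} \<and> Y = {y} \<and> x \<in> S \<and> y \<in> S \<and> {x,y} \<in> edges G" if asm: "{X,Y} \<in> edges M" for X Y
  proof -
    obtain x y where xy: "{X,Y} = {{x},{y}}" "x \<in> S" "y \<in> S" "{x,y} \<in> edges G"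
      using asm unfolding eM by blast
    from xy(1) have "(X={x} \<and> Y={y}) \<or> (X={y} \<and> Y={x})" by (rule doubleton_eq_iff[THEN iffD1])
    then show ?thesis
    proof
      assume "X={x} \<and> Y={y}" then show ?thesis using xy by blast
    next
      assume "X={y} \<and> Y={x}" moreover have "{y,x} \<in> edges G" using xy(4) by (simp add: insert_commute)
      ultimately show ?thesis using xy by blast
    qed
  qed
  have simp: "simple_graph M"
    unfolding simple_graph_def vM eM
  proof (rule subsetI)
    fix e assume "e \<in> {{{x}, {y}} |x y. x \<in> S \<and> y \<in> S \<and> {x, y} \<in> edges G}"
    then obtain x y where xy: "e = {{x},{y}}" "x \<in> S" "y \<in> S" "{x,y} \<in> edges G" by blast
    then have "{x} \<noteq> {y}" using ne by simp
    then show "e \<in> {{a, b} |a b. a \<in> (\<lambda>s. {s}) ` S \<and> b \<in> (\<lambda>s. {s}) ` S \<and> a \<noteq> b}"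
      using xy by blast
  qed
  have minor: "is_minor M G"
    unfolding is_minor_def
  proof (intro exI conjI)
    show "branch_sets G ((\<lambda>s. {s}) ` S)"
      unfolding branch_sets_def induces_connected_def using S(2) by auto
    show "inj_on id (verts M)" by simp
    show "graph_hom M (contract G ((\<lambda>s. {s}) ` S)) id"
      unfolding graph_hom_def contract_def verts_def edges_def
    proof (intro conjI allI impI)
      show "id ` fst M \<subseteq> fst ((\<lambda>s. {s}) ` S, {{d, e} |d e. d \<in> (\<lambda>s. {s}) ` S \<and> e \<in> (\<lambda>s. {s}) ` S \<and> d \<noteq> e \<and> connected_to G d e})"
        using vM unfolding verts_def by simp
    next
      fix X Y assume "{X,Y} \<in> snd M"
      then obtain x y where "X = {x}" "Y = {y}" "x \<in> S" "y \<in> S" "{x,y} \<in> edges G"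
        using eMD unfolding edges_def by blast
      moreover have "x \<noteq> y" using ne calculation by blast
      ultimately show "{id X, id Y} \<in> snd ((\<lambda>s. {s}) ` S, {{d, e} |d e. d \<in> (\<lambda>s. {s}) ` S \<and> e \<in> (\<lambda>s. {s}) ` S \<and> d \<noteq> e \<and> connected_to G d e})"
        unfolding connected_to_def by auto
    qed
  qed
  have niso: "\<not> graph_iso M G"
  proof
    assume "graph_iso M G"
    then obtain h where h: "bij_betw h (verts M) (verts G)" unfolding graph_iso_def by (elim exE conjE)
    have "finite (verts M)" using vM S(1) by simp
    then have "finite (verts G)" using bij_betw_finite[OF h] by simp
    then show False using assms(2) by simp
  qed
  have cMk: "colourable M k" unfolding colourable_def
  proof (intro exI conjI allI impI)
    show "(\<lambda>X. fG (the_elem X)) ` verts M \<subseteq> {..<k}" using fG(1) S(2) unfolding vM by (auto simp: image_subset_iff)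
  next
    fix X Y assume "{X,Y} \<in> edges M"
    then obtain x y where "X = {x}" "Y = {y}" "{x,y} \<in> edges G" using eMD by blast
    then show "fG (the_elem X) \<noteq> fG (the_elem Y)" using fG(2) by simp
  qed
  have low: "k \<le> j" if cj: "colourable M j" for j
  proof (rule ccontr)
    assume "\<not> k \<le> j"
    obtain g where g: "g ` verts M \<subseteq> {..<j}" "\<And>X Y. {X,Y} \<in> edges M \<Longrightarrow> g X \<noteq> g Y"
      using cj unfolding colourable_def by blast
    have "(\<lambda>x. g {x}) ` S \<subseteq> {..<k-1}" using g(1) \<open>\<not> k \<le> j\<close> unfolding vM by force
    then obtain x y where "x \<in> S" "y \<in> S" "{x,y} \<in> edges G" "g {x} = g {y}" using S(3) by blast
    moreover have "{{x},{y}} \<in> edges M" unfolding eM using calculation by blast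
    ultimately show False using g(2) by blast
  qed
  have "chromatic_number M = k"
    unfolding chromatic_number_def using cMk low by (intro Least_equality) auto
  then show ?thesis using simp minor niso cMk unfolding finite_chromatic_def k_def by blast
qed

end
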